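(* Let $\alpha\ge3$, $t_0>0$, $x_0\in\mathcal H$, and let $x:[t_0,+\infty)\to\mathcal H$ be a solution of the Cauchy problem $$\tfrac{\alpha}{t}\dot x(t)+\operatorname{proj}_{C(x(t))+\ddot x(t)}(0)=0\ (t>t_0),\qquad x(t_0)=x_0,\ \dot x(t_0)=0 .$$ Assume the Assumption on the weak Pareto set in the context holds, and let $R$ be the constant defined there with respect to $x_0$. Then for all $t\in[t_0,+\infty)$ $$t^2u_0(x(t))\le t_0^2u_0(x_0)+2(\alpha-1)R+(3-\alpha)\int_{t_0}^t s\|\dot x(s)\|^2\,ds,$$ and hence $u_0(x(t))\le \dfrac{t_0^2u_0(x_0)+2(\alpha-1)R}{t^2}$ for all $t\in[t_0,+\infty)$.
   Context: $\mathcal H$ is a real Hilbert space. $f_1,\dots,f_m:\mathcal H\to\mathbb R$ are convex and continuously differentiable, and $F=(f_1,\dots,f_m)$. $C(x)=\operatorname{co}\{\nabla f_i(x):i=1,\dots,m\}$. For a closed convex $K\subset\mathcal H$, $\operatorname{proj}_K(y)=\arg\min_{w\in K}\|w-y\|^2$. A solution of the Cauchy problem is a function $x:[t_0,+\infty)\to\mathcal H$ such that: $x\in C^1([t_0,+\infty))$; $\dot x$ is absolutely continuous on $[t_0,T]$ for every $T\ge t_0$; there is a Bochner measurable $\ddot x$ with $\dot x(t)=\dot x(t_0)+\int_{t_0}^t\ddot x(s)\,ds$ for all $t$, and $\frac{d}{dt}\dot x=\ddot x$ a.e.; the equation holds for almost all $t\ge t_0$; and the initial conditions hold. A point $x^*$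 is weakly Pareto optimal if there is no $x$ with $f_i(x)<f_i(x^* )$ for all $i$; $P_w$ denotes the set of such points. The merit function is $u_0(x)=\sup_{z\in\mathcal H}\min_i\big(f_i(x)-f_i(z)\big)$. For $\hat F\in\mathbb R^m$, $\mathcal L(\hat F)=\{x:F(x)\le\hat F\}$ and $P_w(\hat F)=P_w\cap\mathcal L(\hat F)$. Assumption: for all $x_0\in\mathcal H$ and all $x\in\mathcal L(F(x_0))$ there exists $x^*\in P_w(F(x))$, and $$R:=\sup_{F^*\in F(P_w(F(x_0)))}\ \inf_{x\in F^{-1}(F^* )}\tfrac12\|x-x_0\|^2<+\infty .$$ *)

theory Defs
  imports "HOL-Analysis.Analysis"
begin

definition proj :: "'a::real_normed_vector set \<Rightarrow> 'a \<Rightarrow> 'a" where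
  "proj K y = (SOME w. w \<in> K \<and> (\<forall>v\<in>K. (norm (w - y))\<^sup>2 \<le> (norm (v - y))\<^sup>2))"

definition Cset :: "('m \<Rightarrow> 'a \<Rightarrow> 'a::real_vector) \<Rightarrow> 'a \<Rightarrow> 'a set" where
  "Cset g x = convex hull (range (\<lambda>i. g i x))"

text \<open>F(x) as a vector in R^m (functions 'm => real; order is componentwise).\<close>
definition Fv :: "('m \<Rightarrow> 'a \<Rightarrow> real) \<Rightarrow> 'a \<Rightarrow> 'm \<Rightarrow> real" where
  "Fv f x = (\<lambda>i. f i x)"

definition weak_pareto :: "('m \<Rightarrow> 'a \<Rightarrow> real) \<Rightarrow> 'a set" where
  "weak_pareto f = {xs. \<not> (\<exists>x. \<forall>i. f i x < f i xs)}"

definition level :: "('m \<Rightarrow> 'a \<Rightarrow> real) \<Rightarrow> ('m \<Rightarrow> real) \<Rightarrow> 'a set" where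
  "level f Fh = {x. \<forall>i. f i x \<le> Fh i}"

definition weak_pareto_level :: "('m \<Rightarrow> 'a \<Rightarrow> real) \<Rightarrow> ('m \<Rightarrow> real) \<Rightarrow> 'a set" where
  "weak_pareto_level f Fh = weak_pareto f \<inter> level f Fh"

text \<open>Merit function u_0, valued in the extended reals (the supremum may be infinite).\<close>
definition u0 :: "('m::finite \<Rightarrow> 'a \<Rightarrow> real) \<Rightarrow> 'a \<Rightarrow> ereal" where
  "u0 f x = (SUP z. ereal (Min (range (\<lambda>i. f i x - f i z))))"

definition Rconst :: "('m \<Rightarrow> 'a \<Rightarrow> real) \<Rightarrow> 'a::real_normed_vector \<Rightarrow> ereal" where
  "Rconst f x0 = (SUP Fs \<in> Fv f ` weak_pareto_level f (Fv f x0).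
      ereal (INF x \<in> Fv f -` {Fs}. (norm (x - x0))\<^sup>2 / 2))"

definition abs_cont_on :: "real \<Rightarrow> real \<Rightarrow> (real \<Rightarrow> 'a::real_normed_vector) \<Rightarrow> bool" where
  "abs_cont_on a b h \<longleftrightarrow>
     (\<forall>\<epsilon>>0. \<exists>\<delta>>0. \<forall>D::(real \<times> real) set.
        finite D \<and> (\<forall>(u,v)\<in>D. a \<le> u \<and> u \<le> v \<and> v \<le> b) \<and>
        pairwise (\<lambda>(u,v) (u',v'). {u<..<v} \<inter> {u'<..<v'} = {}) D \<and>
        (\<Sum>(u,v)\<in>D. v - u) < \<delta>
        \<longrightarrow> (\<Sum>(u,v)\<in>D. norm (h v - h u)) < \<epsilon>)"

definition bochner_measurable_on :: "(real \<Rightarrow> 'a::real_normed_vector) \<Rightarrow> real set \<Rightarrow> bool" where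
  "bochner_measurable_on h S \<longleftrightarrow>
     (\<exists>\<phi> N. negligible N \<and>
        (\<forall>n. finite (range (\<phi> n)) \<and> (\<forall>v. (\<phi> n) -` {v} \<in> sets lebesgue)) \<and>
        (\<forall>s\<in>S - N. (\<lambda>n. \<phi> n s) \<longlonglongrightarrow> h s))"

end

theory Submission
  imports Defs
begin



lemma grad_ineq:
  fixes f :: "'a::real_inner \<Rightarrow> real"
  assumes cf: "convex_on UNIV f" and df: "(f has_derivative (\<lambda>h. g \<bullet> h)) (at y)"
  shows "f y + g \<bullet> (z - y) \<le> f z"
proof -
  define q where "q s = f (y + s *\<^sub>R (z - y))" for s::real
  have cq: "convex_on UNIV q"
  proof (rule convex_onI)
    fix t a b :: real assume "t > 0" "t < 1"
    have "y + ((1 - t) * a + t * b) *\<^sub>R (z - y) = (1 - t) *\<^sub>R (y + a *\<^sub>R (z - y)) + t *\<^sub>R (y + b *\<^sub>R (z - y))"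
      by (simp add: algebra_simps)
    then show "q ((1 - t) *\<^sub>R a + t *\<^sub>R b) \<le> (1 - t) * q a + t * q b"
      unfolding q_def using convex_onD[OF cf, of t] \<open>t>0\<close> \<open>t<1\<close> by simp
  qed simp
  have d1: "((\<lambda>s. y + s *\<^sub>R (z - y)) has_derivative (\<lambda>s. s *\<^sub>R (z - y))) (at 0)"
    by (auto intro!: derivative_eq_intros)
  have d2: "(f has_derivative (\<lambda>h. g \<bullet> h)) (at ((\<lambda>s. y + s *\<^sub>R (z - y)) 0))"
    using df by simp
  have "(q has_derivative (\<lambda>s. g \<bullet> (s *\<^sub>R (z - y)))) (at 0)"
    using has_derivative_compose[OF d1 d2] unfolding q_def o_def .
  then have "(q has_field_derivative (g \<bullet> (z - y))) (at 0 within UNIV)"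
    by (simp add: has_field_derivative_def mult.commute[of _ "g \<bullet> (z - y)"])
  from convex_on_imp_above_tangent[OF cq _ _ _ this, of 1] show ?thesis
    by (simp add: q_def)
qed

lemma proj_props:
  fixes K :: "'a::real_inner set"
  assumes "compact K" "convex K" "K \<noteq> {}"
  shows "proj K 0 \<in> K \<and> (\<forall>w\<in>K. proj K 0 \<bullet> (w - proj K 0) \<ge> 0)"
proof -
  obtain p where p: "p \<in> K" "\<And>v. v \<in> K \<Longrightarrow> norm p \<le> norm v"
    using compact_attains_inf[of "norm ` K"] assms
    by (metis (no_types, lifting) compact_continuous_image continuous_on_norm_id empty_is_image imageE imageI)
  have ex: "\<exists>w. w \<in> K \<and> (\<forall>v\<in>K. (norm (w - 0))\<^sup>2 \<le> (norm (v - 0))\<^sup>2)"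
    using p by (auto intro!: exI[of _ p] power_mono)
  define q where "q = proj K 0"
  have q: "q \<in> K" "\<And>v. v \<in> K \<Longrightarrow> (norm q)\<^sup>2 \<le> (norm v)\<^sup>2"
    using someI_ex[OF ex] unfolding q_def proj_def by auto
  have "q \<bullet> (w - q) \<ge> 0" if w: "w \<in> K" for w
  proof (rule ccontr)
    assume neg: "\<not> q \<bullet> (w - q) \<ge> 0"
    then have wq: "w - q \<noteq> 0" by auto
    define d where "d = w - q"
    define s where "s = min 1 (- (q \<bullet> d) / (norm d)\<^sup>2)"
    have nd: "(norm d)\<^sup>2 > 0" using wq d_def by simp
    have s0: "s > 0" using neg nd unfolding s_def d_def by (auto simp: field_simps)
    have s1: "s \<le> 1" unfolding s_def by simp
    have "s \<le> - (q \<bullet> d) / (norm d)\<^sup>2" unfolding s_def by simp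
    then have "s * (norm d)\<^sup>2 \<le> (- (q \<bullet> d) / (norm d)\<^sup>2) * (norm d)\<^sup>2"
      using nd by (intro mult_right_mono) auto
    also have "\<dots> = - (q \<bullet> d)" using nd by simp
    finally have sle: "s * (norm d)\<^sup>2 \<le> - (q \<bullet> d)" .
    have "q + s *\<^sub>R d = (1 - s) *\<^sub>R q + s *\<^sub>R w" by (simp add: d_def algebra_simps)
    also have "\<dots> \<in> K" using assms(2) q(1) w s0 s1 by (simp add: convex_def)
    finally have "(norm q)\<^sup>2 \<le> (norm (q + s *\<^sub>R d))\<^sup>2" using q(2) by blast
    also have "(norm (q + s *\<^sub>R d))\<^sup>2 = (norm q)\<^sup>2 + 2 * s * (q \<bullet> d) + s * (s * (norm d)\<^sup>2)"
      unfolding power2_norm_eq_inner by (simp add: inner_add_left inner_add_right algebra_simps inner_commute)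
    finally have "0 \<le> s * (2 * (q \<bullet> d) + s * (norm d)\<^sup>2)"
      by (simp add: algebra_simps)
    then have "0 \<le> 2 * (q \<bullet> d) + s * (norm d)\<^sup>2" using s0
      by (simp add: zero_le_mult_iff)
    moreover have "q \<bullet> d < 0" using neg d_def by simp
    ultimately show False using sle by linarith
  qed
  then show ?thesis using q(1) q_def by auto
qed




lemma mono_dini:
  fixes H :: "real \<Rightarrow> real"
  assumes ab: "a \<le> b" and cont: "continuous_on {a..b} H" and negE: "negligible E"
   and lip: "\<And>t. t \<in> {a..b} \<inter> E \<Longrightarrow> \<exists>B \<delta>. \<delta> > 0 \<and> (\<forall>s\<in>{a..b}. \<bar>s - t\<bar> < \<delta> \<longrightarrow> \<bar>H s - H t\<bar> \<le> B * \<bar>s - t\<bar>)"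
   and dini: "\<And>t \<epsilon> \<delta>. t \<in> {a<..<b} - E \<Longrightarrow> \<epsilon> > 0 \<Longrightarrow> \<delta> > 0 \<Longrightarrow> \<exists>h. 0 < h \<and> h < \<delta> \<and> H (t + h) - H t \<le> \<epsilon> * h"
  shows "H b \<le> H a"
proof (rule ccontr)
  assume "\<not> H b \<le> H a"
  then have Hab: "H a < H b" by simp
  then have "a \<noteq> b" by auto
  with ab have ab': "a < b" by simp
  define e0 where "e0 = (H b - H a) / (2 * (b - a))"
  have e0: "e0 > 0" using Hab ab' unfolding e0_def by simp
  define G where "G s = H s - e0 * (s - a)" for s
  have Gab: "G a < G b"
  proof -
    have "e0 * (b - a) = (H b - H a) / 2" using ab' unfolding e0_def by (simp add: field_simps)
    then show ?thesis unfolding G_def using Hab by simp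
  qed
  have contG: "continuous_on {a..b} G" unfolding G_def by (intro continuous_intros cont)
  define S where "S = {a..b} \<inter> E"
  have negGS: "negligible (G ` S)"
  proof (rule negligible_locally_Lipschitz_image)
    show "DIM(real) \<le> DIM(real)" by simp
    show "negligible S" using negE negligible_subset unfolding S_def by blast
    fix x assume xS: "x \<in> S"
    then obtain B \<delta> where B: "\<delta> > 0" "\<forall>s\<in>{a..b}. \<bar>s - x\<bar> < \<delta> \<longrightarrow> \<bar>H s - H x\<bar> \<le> B * \<bar>s - x\<bar>"
      using lip unfolding S_def by blast
    show "\<exists>T B. open T \<and> x \<in> T \<and> (\<forall>y\<in>S \<inter> T. norm (G y - G x) \<le> B * norm (y - x))"
    proof (intro exI conjI ballI)
      show "open (ball x \<delta>)" by simp
      show "x \<in> ball x \<delta>" using B by simp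
      fix y assume "y \<in> S \<inter> ball x \<delta>"
      then have y: "y \<in> {a..b}" "\<bar>y - x\<bar> < \<delta>" unfolding S_def by (auto simp: dist_real_def)
      have "G y - G x = (H y - H x) - e0 * (y - x)" unfolding G_def by (simp add: algebra_simps)
      then have "\<bar>G y - G x\<bar> \<le> \<bar>H y - H x\<bar> + \<bar>e0 * (y - x)\<bar>" by (simp add: abs_triangle_ineq4)
      also have "\<bar>e0 * (y - x)\<bar> = e0 * \<bar>y - x\<bar>" using e0 by (simp add: abs_mult)
      also have "\<bar>H y - H x\<bar> \<le> B * \<bar>y - x\<bar>" using B(2) y by blast
      then have "\<bar>H y - H x\<bar> + e0 * \<bar>y - x\<bar> \<le> (B + e0) * \<bar>y - x\<bar>" by (simp add: distrib_right)
      finally show "norm (G y - G x) \<le> (B + e0) * norm (y - x)" by simp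
    qed
  qed
  have "\<not> negligible {G a<..<G b}"
    using negligible_interval(2)[of "G a" "G b"] Gab by (simp add: box_real)
  then obtain y where y: "y \<in> {G a<..<G b}" "y \<notin> G ` S"
    using negGS negligible_subset[of "G ` S" "{G a<..<G b}"] by blast
  define A where "A = {a..b} \<inter> G -` {..y}"
  have clA: "closed A" unfolding A_def by (rule continuous_closed_preimage[OF contG]) auto
  have aA: "a \<in> A" using y ab unfolding A_def by auto
  have bdA: "bdd_above A" unfolding A_def by (rule bdd_aboveI[of _ b]) auto
  define s0 where "s0 = Sup A"
  have s0A: "s0 \<in> A" unfolding s0_def using closed_contains_Sup[OF _ bdA clA] aA by blast
  have ubA: "\<And>s. s \<in> A \<Longrightarrow> s \<le> s0" unfolding s0_def using bdA by (simp add: cSup_upper)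
  have s0ab: "a \<le> s0" "s0 \<le> b" "G s0 \<le> y" using s0A unfolding A_def by auto
  have s0b: "s0 < b" using s0ab y by (metis greaterThanLessThan_iff le_less not_le)
  have Gs0: "G s0 = y"
  proof (rule ccontr)
    assume "G s0 \<noteq> y"
    then have lt: "G s0 < y" using s0ab by simp
    have "continuous (at s0 within {a..b}) G"
      using contG s0ab by (simp add: continuous_on_eq_continuous_within)
    then obtain d where d: "d > 0" "\<forall>s\<in>{a..b}. dist s s0 < d \<longrightarrow> dist (G s) (G s0) < y - G s0"
      using lt unfolding continuous_within_eps_delta by (meson diff_gt_0_iff_gt)
    define s where "s = min b (s0 + d / 2)"
    have s: "s \<in> {a..b}" "dist s s0 < d" "s > s0"
      using s0ab s0b d unfolding s_def by (auto simp: dist_real_def)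
    then have "\<bar>G s - G s0\<bar> < y - G s0" using d(2) by (auto simp: dist_real_def)
    then have "G s < y" by linarith
    then have "s \<in> A" using s unfolding A_def by auto
    then show False using ubA s by fastforce
  qed
  have "s0 \<notin> E" using y(2) Gs0 s0ab unfolding S_def by auto
  moreover have "s0 \<noteq> a" using Gs0 y by auto
  ultimately have "s0 \<in> {a<..<b} - E" using s0ab s0b by auto
  from dini[OF this e0, of "b - s0"] s0b obtain h where h: "0 < h" "h < b - s0" "H (s0 + h) - H s0 \<le> e0 * h"
    by auto
  have "G (s0 + h) \<le> G s0" using h unfolding G_def by (simp add: algebra_simps)
  then have "s0 + h \<in> A" using h s0ab Gs0 unfolding A_def by auto
  then show False using ubA h by fastforce
qed

lemma dini_from_majorant:
  fixes H K :: "real \<Rightarrow> real"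
  assumes eq: "K t = H t" and le: "\<And>s. t < s \<Longrightarrow> s < t + \<rho> \<Longrightarrow> H s \<le> K s" and rho: "\<rho> > 0"
    and dK: "(K has_real_derivative D) (at t)" and D: "D \<le> 0"
    and e: "\<epsilon> > 0" and d: "\<delta> > 0"
  shows "\<exists>h. 0 < h \<and> h < \<delta> \<and> H (t + h) - H t \<le> \<epsilon> * h"
proof -
  have eqf: "(\<lambda>x. x * D) = (*) D" by (auto simp: fun_eq_iff)
  have "(K has_derivative (\<lambda>x. x * D)) (at t)" using dK unfolding eqf by (simp add: has_field_derivative_def)
  then obtain d' where d': "d' > 0" "\<And>y. norm (y - t) < d' \<Longrightarrow> norm (K y - K t - (y - t) * D) \<le> \<epsilon> * norm (y - t)"
    unfolding has_derivative_at_alt using e by blast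
  define h where "h = min (min \<delta> d') \<rho> / 2"
  have h: "0 < h" "h < \<delta>" "h < d'" "h < \<rho>" using d d' rho unfolding h_def by auto
  have "K (t + h) - K t - h * D \<le> \<epsilon> * h" using d'(2)[of "t + h"] h by auto
  then have "K (t + h) - K t \<le> \<epsilon> * h" using h D by (smt (verit) mult_nonneg_nonpos)
  moreover have "H (t + h) \<le> K (t + h)" using le h by auto
  ultimately show ?thesis using h eq by (intro exI[of _ h]) auto
qed




definition plip :: "(real \<Rightarrow> 'b::real_normed_vector) \<Rightarrow> real set \<Rightarrow> real \<Rightarrow> bool" where
  "plip u S t \<longleftrightarrow> (\<exists>B. eventually (\<lambda>s. norm (u s - u t) \<le> B * \<bar>s - t\<bar>) (at t within S))"

lemma plip_near: "eventually (\<lambda>s. \<bar>s - t\<bar> < 1) (at (t::real) within S)"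
proof -
  have "\<exists>d>0. \<forall>x\<in>S. x \<noteq> t \<and> dist x t < d \<longrightarrow> \<bar>x - t\<bar> < 1"
    by (rule exI[of _ 1]) (auto simp: dist_real_def)
  then show ?thesis unfolding eventually_at .
qed

lemma plip_deriv:
  assumes "(u has_vector_derivative D) (at t within S)"
  shows "plip u S t"
proof -
  have "(u has_derivative (\<lambda>h. h *\<^sub>R D)) (at t within S)"
    using assms by (simp add: has_vector_derivative_def)
  then obtain d where d: "d > 0" "\<forall>y\<in>S. norm (y - t) < d \<longrightarrow> norm (u y - u t - (y - t) *\<^sub>R D) \<le> 1 * norm (y - t)"
    unfolding has_derivative_within_alt by (meson zero_less_one)
  have "eventually (\<lambda>s. norm (u s - u t) \<le> (1 + norm D) * \<bar>s - t\<bar>) (at t within S)"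
    unfolding eventually_at
  proof (intro exI[of _ d] conjI ballI impI allI d)
    fix y assume y: "y \<in> S" "y \<noteq> t \<and> dist y t < d"
    then have "norm (u y - u t - (y - t) *\<^sub>R D) \<le> \<bar>y - t\<bar>" using d by (auto simp: dist_real_def)
    moreover have "norm (u y - u t) \<le> norm (u y - u t - (y - t) *\<^sub>R D) + norm ((y - t) *\<^sub>R D)"
      using norm_triangle_ineq[of "u y - u t - (y - t) *\<^sub>R D" "(y - t) *\<^sub>R D"] by simp
    moreover have "norm ((y - t) *\<^sub>R D) = \<bar>y - t\<bar> * norm D" by simp
    ultimately have "norm (u y - u t) \<le> \<bar>y - t\<bar> + \<bar>y - t\<bar> * norm D" by linarith
    then show "norm (u y - u t) \<le> (1 + norm D) * \<bar>y - t\<bar>" by (simp add: algebra_simps)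
  qed
  then show ?thesis unfolding plip_def by blast
qed

lemma plip_const: "plip (\<lambda>s. c) S t"
  unfolding plip_def by (intro exI[of _ 0]) simp

lemma plip_add:
  assumes "plip u S t" "plip v S t" shows "plip (\<lambda>s. u s + v s) S t"
proof -
  obtain A B where "eventually (\<lambda>s. norm (u s - u t) \<le> A * \<bar>s - t\<bar>) (at t within S)"
     "eventually (\<lambda>s. norm (v s - v t) \<le> B * \<bar>s - t\<bar>) (at t within S)"
    using assms unfolding plip_def by blast
  then have "eventually (\<lambda>s. norm ((u s + v s) - (u t + v t)) \<le> (A + B) * \<bar>s - t\<bar>) (at t within S)"
  proof eventually_elim
    case (elim s)
    have "norm ((u s + v s) - (u t + v t)) \<le> norm (u s - u t) + norm (v s - v t)"
      by (metis add_diff_add norm_triangle_ineq)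
    then show ?case using elim by (simp add: distrib_right)
  qed
  then show ?thesis unfolding plip_def by blast
qed

lemma plip_minus:
  assumes "plip u S t" shows "plip (\<lambda>s. - u s) S t"
  using assms unfolding plip_def by (simp add: norm_minus_commute)

lemma plip_diff:
  assumes "plip u S t" "plip v S t" shows "plip (\<lambda>s. u s - v s) S t"
  using plip_add[OF assms(1) plip_minus[OF assms(2)]] by simp

lemma plip_inner:
  fixes u v :: "real \<Rightarrow> 'a::real_inner"
  assumes "plip u S t" "plip v S t" shows "plip (\<lambda>s. u s \<bullet> v s) S t"
proof -
  obtain A B where "eventually (\<lambda>s. norm (u s - u t) \<le> A * \<bar>s - t\<bar>) (at t within S)"
     "eventually (\<lambda>s. norm (v s - v t) \<le> B * \<bar>s - t\<bar>) (at t within S)"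
    using assms unfolding plip_def by blast
  then have "eventually (\<lambda>s. norm (u s \<bullet> v s - u t \<bullet> v t) \<le> ((norm (u t) + \<bar>A\<bar>) * \<bar>B\<bar> + \<bar>A\<bar> * norm (v t)) * \<bar>s - t\<bar>) (at t within S)"
    using plip_near[of t S]
  proof eventually_elim
    case (elim s)
    have "A * \<bar>s - t\<bar> \<le> \<bar>A\<bar> * \<bar>s - t\<bar>" "B * \<bar>s - t\<bar> \<le> \<bar>B\<bar> * \<bar>s - t\<bar>"
      by (intro mult_right_mono; simp)+
    then have A0: "norm (u s - u t) \<le> \<bar>A\<bar> * \<bar>s - t\<bar>" "norm (v s - v t) \<le> \<bar>B\<bar> * \<bar>s - t\<bar>"
      using elim by linarith+
    have "norm (u s) \<le> norm (u t) + norm (u s - u t)" by (metis norm_triangle_sub)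
    also have "\<bar>A\<bar> * \<bar>s - t\<bar> \<le> \<bar>A\<bar> * 1" using elim(3) by (intro mult_left_mono) auto
    then have "norm (u s - u t) \<le> \<bar>A\<bar>" using A0(1) by linarith
    finally have us: "norm (u s) \<le> norm (u t) + \<bar>A\<bar>" by simp
    have eq: "u s \<bullet> v s - u t \<bullet> v t = u s \<bullet> (v s - v t) + (u s - u t) \<bullet> v t"
      by (simp add: inner_diff_left inner_diff_right)
    have "\<bar>u s \<bullet> v s - u t \<bullet> v t\<bar> \<le> \<bar>u s \<bullet> (v s - v t)\<bar> + \<bar>(u s - u t) \<bullet> v t\<bar>"
      unfolding eq by (rule abs_triangle_ineq)
    also have "\<dots> \<le> norm (u s) * norm (v s - v t) + norm (u s - u t) * norm (v t)"
      by (intro add_mono Cauchy_Schwarz_ineq2)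
    also have "\<dots> \<le> (norm (u t) + \<bar>A\<bar>) * (\<bar>B\<bar> * \<bar>s - t\<bar>) + (\<bar>A\<bar> * \<bar>s - t\<bar>) * norm (v t)"
      by (intro add_mono mult_mono us A0) auto
    finally show ?case by (simp add: algebra_simps)
  qed
  then show ?thesis unfolding plip_def by blast
qed

lemma plip_mult:
  fixes u v :: "real \<Rightarrow> real"
  assumes "plip u S t" "plip v S t" shows "plip (\<lambda>s. u s * v s) S t"
  using plip_inner[OF assms] by simp

lemma plip_scaleR:
  fixes v :: "real \<Rightarrow> 'a::real_normed_vector"
  assumes "plip v S t" shows "plip (\<lambda>s. c *\<^sub>R v s) S t"
proof -
  obtain B where B: "eventually (\<lambda>s. norm (v s - v t) \<le> B * \<bar>s - t\<bar>) (at t within S)"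
    using assms unfolding plip_def by blast
  then have "eventually (\<lambda>s. norm (c *\<^sub>R v s - c *\<^sub>R v t) \<le> (\<bar>c\<bar> * B) * \<bar>s - t\<bar>) (at t within S)"
  proof eventually_elim
    case (elim s)
    have "norm (c *\<^sub>R v s - c *\<^sub>R v t) = \<bar>c\<bar> * norm (v s - v t)"
      by (simp flip: scaleR_diff_right)
    also have "\<dots> \<le> \<bar>c\<bar> * (B * \<bar>s - t\<bar>)" using elim by (intro mult_left_mono) auto
    finally show ?case by (simp add: mult.assoc)
  qed
  then show ?thesis unfolding plip_def by blast
qed

lemma Min_range_diff:
  fixes a b :: "'m::finite \<Rightarrow> real"
  shows "\<bar>Min (range a) - Min (range b)\<bar> \<le> (\<Sum>i\<in>UNIV. \<bar>a i - b i\<bar>)"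
proof -
  have le: "Min (range a) - Min (range b) \<le> (\<Sum>i\<in>UNIV. \<bar>a i - b i\<bar>)" if "True" for a b :: "'m \<Rightarrow> real"
  proof -
    have "Min (range b) \<in> range b" by (rule Min_in) auto
    then obtain j where j: "Min (range b) = b j" by (metis imageE)
    have "Min (range a) \<le> a j" by simp
    moreover have "a j - b j \<le> \<bar>a j - b j\<bar>" by simp
    moreover have "\<bar>a j - b j\<bar> \<le> (\<Sum>i\<in>UNIV. \<bar>a i - b i\<bar>)"
      by (rule member_le_sum) auto
    ultimately show ?thesis using j by linarith
  qed
  have "Min (range b) - Min (range a) \<le> (\<Sum>i\<in>UNIV. \<bar>a i - b i\<bar>)"
    using le[of b a] by (simp add: abs_minus_commute)
  then show ?thesis using le[of a b] by (simp add: abs_le_iff)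
qed

lemma plip_Min:
  fixes h :: "'m::finite \<Rightarrow> real \<Rightarrow> real"
  assumes "\<And>i. plip (h i) S t"
  shows "plip (\<lambda>s. Min (range (\<lambda>i. h i s))) S t"
proof -
  have "\<forall>i. \<exists>B. eventually (\<lambda>s. norm (h i s - h i t) \<le> B * \<bar>s - t\<bar>) (at t within S)"
    using assms unfolding plip_def by blast
  then obtain B where B: "\<And>i. eventually (\<lambda>s. norm (h i s - h i t) \<le> B i * \<bar>s - t\<bar>) (at t within S)"
    using choice[of "\<lambda>i B. eventually (\<lambda>s. norm (h i s - h i t) \<le> B * \<bar>s - t\<bar>) (at t within S)"] by blast
  have "eventually (\<lambda>s. \<forall>i. norm (h i s - h i t) \<le> B i * \<bar>s - t\<bar>) (at t within S)"
    by (rule eventually_all_finite) (rule B)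
  then have "eventually (\<lambda>s. norm (Min (range (\<lambda>i. h i s)) - Min (range (\<lambda>i. h i t))) \<le> (\<Sum>i\<in>UNIV. B i) * \<bar>s - t\<bar>) (at t within S)"
  proof eventually_elim
    case (elim s)
    have "\<bar>Min (range (\<lambda>i. h i s)) - Min (range (\<lambda>i. h i t))\<bar> \<le> (\<Sum>i\<in>UNIV. \<bar>h i s - h i t\<bar>)"
      by (rule Min_range_diff)
    also have "\<dots> \<le> (\<Sum>i\<in>UNIV. B i * \<bar>s - t\<bar>)"
      using elim by (intro sum_mono) auto
    finally show ?case by (simp add: sum_distrib_right)
  qed
  then show ?thesis unfolding plip_def by blast
qed

lemma plip_continuous:
  assumes "plip u S t" shows "continuous (at t within S) u"
proof -
  obtain B where B: "eventually (\<lambda>s. norm (u s - u t) \<le> B * \<bar>s - t\<bar>) (at t within S)"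
    using assms unfolding plip_def by blast
  have "((\<lambda>s. B * \<bar>s - t\<bar>) \<longlongrightarrow> B * \<bar>t - t\<bar>) (at t within S)"
    by (intro tendsto_intros)
  then have "((\<lambda>s. B * \<bar>s - t\<bar>) \<longlongrightarrow> 0) (at t within S)" by simp
  then have "((\<lambda>s. u s - u t) \<longlongrightarrow> 0) (at t within S)"
    using B by (rule Lim_null_comparison[rotated]) 
  then have "(u \<longlongrightarrow> u t) (at t within S)" by (simp add: LIM_zero_iff)
  then show ?thesis unfolding continuous_within .
qed

lemma plip_delta:
  assumes "plip u S t"
  shows "\<exists>B \<delta>. \<delta> > 0 \<and> (\<forall>s\<in>S. \<bar>s - t\<bar> < \<delta> \<longrightarrow> norm (u s - u t) \<le> B * \<bar>s - t\<bar>)"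
proof -
  obtain B where "eventually (\<lambda>s. norm (u s - u t) \<le> B * \<bar>s - t\<bar>) (at t within S)"
    using assms unfolding plip_def by blast
  then obtain d where d: "d > 0" "\<And>s. s \<in> S \<Longrightarrow> s \<noteq> t \<Longrightarrow> dist s t < d \<Longrightarrow> norm (u s - u t) \<le> B * \<bar>s - t\<bar>"
    unfolding eventually_at by blast
  show ?thesis
  proof (intro exI conjI ballI impI)
    fix s assume "s \<in> S" "\<bar>s - t\<bar> < d"
    then show "norm (u s - u t) \<le> B * \<bar>s - t\<bar>" using d(2)[of s] by (cases "s = t") (auto simp: dist_real_def)
  qed (use d in auto)
qed




lemma Cset_compact: "compact (Cset (g :: 'm::finite \<Rightarrow> 'a \<Rightarrow> 'a::real_inner) y)"
  unfolding Cset_def by (rule finite_imp_compact_convex_hull) simp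

lemma Cset_convex: "convex (Cset g y)"
  unfolding Cset_def by simp

lemma Cset_inc: "g i y \<in> Cset g y"
  unfolding Cset_def by (rule hull_inc) simp

lemma Cset_halfspace:
  fixes g :: "'m \<Rightarrow> 'a \<Rightarrow> 'a::real_inner"
  assumes "c \<in> Cset g y" "\<And>i. r \<le> d \<bullet> g i y"
  shows "r \<le> d \<bullet> c"
proof -
  have "Cset g y \<subseteq> {c. d \<bullet> c \<ge> r}"
    unfolding Cset_def by (rule hull_minimal) (use assms(2) convex_halfspace_ge in auto)
  then show ?thesis using assms(1) by auto
qed

lemma Cset_norm:
  fixes g :: "'m::finite \<Rightarrow> 'a \<Rightarrow> 'a::real_inner"
  assumes "c \<in> Cset g y"
  shows "norm c \<le> (\<Sum>i\<in>UNIV. norm (g i y))"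
proof -
  have "Cset g y \<subseteq> cball 0 (\<Sum>i\<in>UNIV. norm (g i y))"
    unfolding Cset_def
  proof (rule hull_minimal)
    show "range (\<lambda>i. g i y) \<subseteq> cball 0 (\<Sum>i\<in>UNIV. norm (g i y))"
      by (auto intro!: member_le_sum)
  qed simp
  then show ?thesis using assms by auto
qed

lemma eqn_cons:
  fixes g :: "'m::finite \<Rightarrow> 'a \<Rightarrow> 'a::real_inner"
  assumes eq: "\<beta> *\<^sub>R v + proj {c + w | c. c \<in> Cset g y} 0 = 0" and b: "\<beta> > 0"
  shows "\<exists>c\<in>Cset g y. w = - \<beta> *\<^sub>R v - c \<and> (\<forall>i. v \<bullet> g i y \<le> v \<bullet> c)"
proof -
  define K where "K = {c + w | c. c \<in> Cset g y}"
  have K: "K = (+) w ` Cset g y" unfolding K_def by (auto simp: add.commute)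
  have "compact K" unfolding K
    by (intro compact_continuous_image Cset_compact continuous_intros)
  moreover have "convex K" unfolding K by (intro convex_translation Cset_convex)
  moreover have "K \<noteq> {}" unfolding K using Cset_inc[of g undefined y] by blast
  ultimately have P: "proj K 0 \<in> K" "\<And>u. u \<in> K \<Longrightarrow> proj K 0 \<bullet> (u - proj K 0) \<ge> 0"
    using proj_props by blast+
  have p: "proj K 0 = - \<beta> *\<^sub>R v" using eq unfolding K_def by (simp add: eq_neg_iff_add_eq_0 add.commute)
  obtain c where c: "c \<in> Cset g y" "proj K 0 = c + w" using P(1) unfolding K_def by blast
  have w: "w = - \<beta> *\<^sub>R v - c" using c p by (simp add: algebra_simps)
  have "v \<bullet> g i y \<le> v \<bullet> c" for i
  proof -
    have "g i y + w \<in> K" unfolding K_def using Cset_inc[of g i y] by blast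
    from P(2)[OF this] have "0 \<le> (- \<beta> *\<^sub>R v) \<bullet> (g i y - c)" unfolding p w by (simp add: algebra_simps)
    then have "\<beta> * (v \<bullet> g i y) \<le> \<beta> * (v \<bullet> c)" by (simp add: inner_diff_right algebra_simps)
    then show ?thesis using b by simp
  qed
  then show ?thesis using c w by blast
qed




lemma plip_scaleR_fun:
  fixes u :: "real \<Rightarrow> real" and v :: "real \<Rightarrow> 'a::real_normed_vector"
  assumes "plip u S t" "plip v S t" shows "plip (\<lambda>s. u s *\<^sub>R v s) S t"
proof -
  obtain A B where "eventually (\<lambda>s. norm (u s - u t) \<le> A * \<bar>s - t\<bar>) (at t within S)"
     "eventually (\<lambda>s. norm (v s - v t) \<le> B * \<bar>s - t\<bar>) (at t within S)"
    using assms unfolding plip_def by blast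
  then have "eventually (\<lambda>s. norm (u s *\<^sub>R v s - u t *\<^sub>R v t) \<le> ((norm (u t) + \<bar>A\<bar>) * \<bar>B\<bar> + \<bar>A\<bar> * norm (v t)) * \<bar>s - t\<bar>) (at t within S)"
    using plip_near[of t S]
  proof eventually_elim
    case (elim s)
    have "A * \<bar>s - t\<bar> \<le> \<bar>A\<bar> * \<bar>s - t\<bar>" "B * \<bar>s - t\<bar> \<le> \<bar>B\<bar> * \<bar>s - t\<bar>"
      by (intro mult_right_mono; simp)+
    then have A0: "norm (u s - u t) \<le> \<bar>A\<bar> * \<bar>s - t\<bar>" "norm (v s - v t) \<le> \<bar>B\<bar> * \<bar>s - t\<bar>"
      using elim by linarith+
    have "norm (u s) \<le> norm (u t) + norm (u s - u t)" by (metis norm_triangle_sub)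
    also have "\<bar>A\<bar> * \<bar>s - t\<bar> \<le> \<bar>A\<bar> * 1" using elim(3) by (intro mult_left_mono) auto
    then have "norm (u s - u t) \<le> \<bar>A\<bar>" using A0(1) by linarith
    finally have us: "norm (u s) \<le> norm (u t) + \<bar>A\<bar>" by simp
    have eq: "u s *\<^sub>R v s - u t *\<^sub>R v t = u s *\<^sub>R (v s - v t) + (u s - u t) *\<^sub>R v t"
      by (simp add: algebra_simps)
    have "norm (u s *\<^sub>R v s - u t *\<^sub>R v t) \<le> norm (u s *\<^sub>R (v s - v t)) + norm ((u s - u t) *\<^sub>R v t)"
      unfolding eq by (rule norm_triangle_ineq)
    also have "\<dots> = norm (u s) * norm (v s - v t) + norm (u s - u t) * norm (v t)"
      by simp
    also have "\<dots> \<le> (norm (u t) + \<bar>A\<bar>) * (\<bar>B\<bar> * \<bar>s - t\<bar>) + (\<bar>A\<bar> * \<bar>s - t\<bar>) * norm (v t)"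
      by (intro add_mono mult_mono us A0) auto
    finally show ?case by (simp add: algebra_simps)
  qed
  then show ?thesis unfolding plip_def by blast
qed

lemma plip_lipschitz:
  assumes "\<And>s. s \<in> S \<Longrightarrow> norm (u s - u t) \<le> B * \<bar>s - t\<bar>"
  shows "plip u S t"
proof -
  have "\<exists>d>0. \<forall>s\<in>S. s \<noteq> t \<and> dist s t < d \<longrightarrow> norm (u s - u t) \<le> B * \<bar>s - t\<bar>"
    using assms by (intro exI[of _ 1]) auto
  then show ?thesis unfolding plip_def eventually_at by blast
qed

lemma comp_deriv:
  fixes f :: "'a::real_inner \<Rightarrow> real"
  assumes "(x has_vector_derivative x1) (at t within S)" "(f has_derivative (\<lambda>h. G \<bullet> h)) (at (x t))"
  shows "((\<lambda>s. f (x s)) has_vector_derivative (G \<bullet> x1)) (at t within S)"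
proof -
  have "(x has_derivative (\<lambda>h. h *\<^sub>R x1)) (at t within S)" using assms(1) by (simp add: has_vector_derivative_def)
  from has_derivative_compose[OF this assms(2)]
  have "((\<lambda>s. f (x s)) has_derivative (\<lambda>h. G \<bullet> (h *\<^sub>R x1))) (at t within S)" by (simp add: o_def)
  moreover have "(\<lambda>h. G \<bullet> (h *\<^sub>R x1)) = (\<lambda>h. h *\<^sub>R (G \<bullet> x1))" by (auto simp: fun_eq_iff)
  ultimately show ?thesis by (simp add: has_vector_derivative_def)
qed

lemma vd_inner:
  fixes u v :: "real \<Rightarrow> 'a::real_inner"
  assumes "(u has_vector_derivative u1) (at t within S)" "(v has_vector_derivative v1) (at t within S)"
  shows "((\<lambda>s. u s \<bullet> v s) has_vector_derivative (u t \<bullet> v1 + u1 \<bullet> v t)) (at t within S)"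
  by (rule bounded_bilinear.has_vector_derivative[OF bounded_bilinear_inner assms])

lemma Min_mono_range:
  fixes a b :: "'m::finite \<Rightarrow> real"
  assumes "\<And>i. a i \<le> b i"
  shows "Min (range a) \<le> Min (range b)"
proof -
  have "Min (range b) \<in> range b" by (rule Min_in) auto
  then obtain j where j: "Min (range b) = b j" by (metis imageE)
  have "Min (range a) \<le> a j" by simp
  then show ?thesis using j assms[of j] by linarith
qed

lemma mono_wrap:
  fixes H :: "real \<Rightarrow> real"
  assumes ab: "a \<le> b" and negE: "negligible E"
    and pl: "\<And>t. t \<in> {a..b} \<Longrightarrow> plip H {a..b} t"
    and maj: "\<And>t. t \<in> {a<..<b} - E \<Longrightarrow> \<exists>K D. K t = H t \<and> (\<forall>s. H s \<le> K s) \<and> (K has_real_derivative D) (at t) \<and> D \<le> 0"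
  shows "H b \<le> H a"
proof (rule mono_dini[OF ab _ negE])
  show "continuous_on {a..b} H"
    using pl plip_continuous unfolding continuous_on_eq_continuous_within by blast
  fix t assume "t \<in> {a..b} \<inter> E"
  then show "\<exists>B \<delta>. \<delta> > 0 \<and> (\<forall>s\<in>{a..b}. \<bar>s - t\<bar> < \<delta> \<longrightarrow> \<bar>H s - H t\<bar> \<le> B * \<bar>s - t\<bar>)"
    using plip_delta[OF pl[of t]] by auto
next
  fix t \<epsilon> \<delta> :: real assume t: "t \<in> {a<..<b} - E" and e: "\<epsilon> > 0" and d: "\<delta> > 0"
  obtain K D where K: "K t = H t" "\<And>s. H s \<le> K s" "(K has_real_derivative D) (at t)" "D \<le> 0"
    using maj[OF t] by blast
  show "\<exists>h. 0 < h \<and> h < \<delta> \<and> H (t + h) - H t \<le> \<epsilon> * h"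
    by (rule dini_from_majorant[OF K(1) K(2) zero_less_one K(3) K(4) e d])
qed



lemma D_alg:
  fixes X Y c g W w1 :: "'a::real_inner" and t \<alpha> h :: real
  assumes W: "W = 2 *\<^sub>R Y + t *\<^sub>R X" and w1: "w1 = (3 - \<alpha>) *\<^sub>R X - t *\<^sub>R c"
  shows "t * t * (g \<bullet> X) + 2 * t * h + (1/2) * (W \<bullet> w1 + w1 \<bullet> W) + (\<alpha> - 3) * (Y \<bullet> X + X \<bullet> Y) - (3 - \<alpha>) * (t * (norm X)\<^sup>2)
     = t * t * (X \<bullet> g - X \<bullet> c) + 2 * t * (h - Y \<bullet> c)"
proof -
  have e1: "w1 \<bullet> W = W \<bullet> w1" "X \<bullet> Y = Y \<bullet> X" "g \<bullet> X = X \<bullet> g" by (simp_all add: inner_commute)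
  have e2: "W \<bullet> w1 = 2 * (3 - \<alpha>) * (Y \<bullet> X) - 2 * t * (Y \<bullet> c) + t * (3 - \<alpha>) * (X \<bullet> X) - t * t * (X \<bullet> c)"
    unfolding W w1 by (simp add: inner_add_left inner_diff_right inner_commute[of c X] algebra_simps)
  have e3: "(norm X)\<^sup>2 = X \<bullet> X" by (simp add: power2_norm_eq_inner)
  show ?thesis unfolding e1 e2 e3 by (simp add: algebra_simps)
qed




theorem theorem4p14:
  fixes f :: "'m::finite \<Rightarrow> 'a::{real_inner,complete_space} \<Rightarrow> real"
    and g :: "'m \<Rightarrow> 'a \<Rightarrow> 'a"
    and x x' x'' :: "real \<Rightarrow> 'a"
    and \<alpha> t0 :: real and x0 :: 'a
  assumes conv: "\<And>i. convex_on UNIV (f i)"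
    and grad: "\<And>i y. (f i has_derivative (\<lambda>h. g i y \<bullet> h)) (at y)"
    and grad_cont: "\<And>i. continuous_on UNIV (g i)"
    and alpha: "\<alpha> \<ge> 3" and t0: "t0 > 0"
    and x_C1: "\<And>t. t \<ge> t0 \<Longrightarrow> (x has_vector_derivative x' t) (at t within {t0..})"
    and x'_cont: "continuous_on {t0..} x'"
    and x'_ac: "\<And>T. T \<ge> t0 \<Longrightarrow> abs_cont_on t0 T x'"
    and x''_meas: "bochner_measurable_on x'' {t0..}"
    and x''_int: "\<And>t. t \<ge> t0 \<Longrightarrow> (x'' has_integral (x' t - x' t0)) {t0..t}"
    and x''_deriv: "\<exists>N. negligible N \<and>
          (\<forall>t \<in> {t0..} - N. (x' has_vector_derivative x'' t) (at t within {t0..}))"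
    and eqn: "\<exists>N. negligible N \<and> (\<forall>t \<in> {t0<..} - N.
          (\<alpha> / t) *\<^sub>R x' t + proj {c + x'' t | c. c \<in> Cset g (x t)} 0 = 0)"
    and init: "x t0 = x0" "x' t0 = 0"
    and pareto: "\<And>y0 y. y \<in> level f (Fv f y0) \<Longrightarrow>
          \<exists>xs. xs \<in> weak_pareto_level f (Fv f y)"
    and R_fin: "Rconst f x0 < \<infinity>"
  shows "\<forall>t \<ge> t0.
      ereal (t\<^sup>2) * u0 f (x t) \<le> ereal (t0\<^sup>2) * u0 f x0 + ereal (2 * (\<alpha> - 1)) * Rconst f x0
        + ereal ((3 - \<alpha>) * integral {t0..t} (\<lambda>s. s * (norm (x' s))\<^sup>2))
    \<and> u0 f (x t) \<le> (ereal (t0\<^sup>2) * u0 f x0 + ereal (2 * (\<alpha> - 1)) * Rconst f x0) / ereal (t\<^sup>2)"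
proof -
  define \<phi> where "\<phi> y z = Min (range (\<lambda>i. f i y - f i z))" for y z
  define Ig where "Ig T = integral {t0..T} (\<lambda>s. s * (norm (x' s))\<^sup>2)" for T
  obtain N1 where N1: "negligible N1" "\<And>t. t \<in> {t0..} - N1 \<Longrightarrow> (x' has_vector_derivative x'' t) (at t within {t0..})"
    using x''_deriv by blast
  obtain N2 where N2: "negligible N2" "\<And>t. t \<in> {t0<..} - N2 \<Longrightarrow> (\<alpha> / t) *\<^sub>R x' t + proj {c + x'' t | c. c \<in> Cset g (x t)} 0 = 0"
    using eqn by blast
  define E where "E = N1 \<union> N2"
  have negE: "negligible E" using N1(1) N2(1) unfolding E_def by simp
  have xdS: "\<And>t S. t \<ge> t0 \<Longrightarrow> S \<subseteq> {t0..} \<Longrightarrow> (x has_vector_derivative x' t) (at t within S)"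
    using x_C1 has_vector_derivative_within_subset by blast
  have xd_at: "(x has_vector_derivative x' t) (at t)" if "t > t0" for t
  proof -
    have "t \<in> interior {t0..}" using that by simp
    then show ?thesis using x_C1[of t] at_within_interior[of t "{t0..}"] that by simp
  qed
  have x'd_at: "(x' has_vector_derivative x'' t) (at t)" if "t > t0" "t \<notin> E" for t
  proof -
    have "t \<in> interior {t0..}" using that by simp
    then show ?thesis using N1(2)[of t] at_within_interior[of t "{t0..}"] that unfolding E_def by simp
  qed
  have dyn: "\<exists>c\<in>Cset g (x t). x'' t = - (\<alpha> / t) *\<^sub>R x' t - c \<and> (\<forall>i. x' t \<bullet> g i (x t) \<le> x' t \<bullet> c)"
    if "t > t0" "t \<notin> E" for t
  proof (rule eqn_cons)
    show "(\<alpha> / t) *\<^sub>R x' t + proj {c + x'' t | c. c \<in> Cset g (x t)} 0 = 0"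
      using N2(2)[of t] that unfolding E_def by simp
    show "\<alpha> / t > 0" using that t0 alpha by simp
  qed
  have contx: "continuous_on {t0..} x"
    by (rule continuous_on_vector_derivative) (use x_C1 in auto)
  have lipx': "\<exists>M. \<forall>u\<in>{t0..T}. \<forall>v\<in>{t0..T}. norm (x' v - x' u) \<le> M * \<bar>v - u\<bar>" if T: "T \<ge> t0" for T
  proof -
    have "bounded (x' ` {t0..T})"
      by (intro compact_imp_bounded compact_continuous_image continuous_on_subset[OF x'_cont]) auto
    then obtain B1 where B1: "B1 > 0" "\<And>s. s \<in> {t0..T} \<Longrightarrow> norm (x' s) \<le> B1"
      unfolding bounded_pos by auto
    have cg: "continuous_on {t0..T} (\<lambda>s. g i (x s))" for i
      by (rule continuous_on_compose2[OF grad_cont continuous_on_subset[OF contx]]) auto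
    have "continuous_on {t0..T} (\<lambda>s. \<Sum>i\<in>UNIV. norm (g i (x s)))"
      by (intro continuous_intros cg)
    then have "bounded ((\<lambda>s. \<Sum>i\<in>UNIV. norm (g i (x s))) ` {t0..T})"
      by (intro compact_imp_bounded compact_continuous_image) auto
    then obtain B2 where B2: "B2 > 0" "\<And>s. s \<in> {t0..T} \<Longrightarrow> norm (\<Sum>i\<in>UNIV. norm (g i (x s))) \<le> B2"
      unfolding bounded_pos by auto
    define M where "M = \<alpha> / t0 * B1 + B2"
    have M0: "M \<ge> 0" unfolding M_def using B1 B2 t0 alpha by simp
    have bd: "norm (x'' s) \<le> M" if s: "s \<in> {t0..T} - (E \<union> {t0})" for s
    proof -
      have st: "s > t0" "s \<notin> E" using s by auto
      obtain c where c: "c \<in> Cset g (x s)" "x'' s = - (\<alpha> / s) *\<^sub>R x' s - c" using dyn[OF st] by blast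
      have "norm (x'' s) \<le> norm ((\<alpha> / s) *\<^sub>R x' s) + norm c"
        unfolding c(2) by (metis norm_minus_cancel norm_triangle_ineq4 scaleR_minus_left)
      also have "norm ((\<alpha> / s) *\<^sub>R x' s) = (\<alpha> / s) * norm (x' s)" using st t0 alpha by simp
      also have "(\<alpha> / s) * norm (x' s) \<le> (\<alpha> / t0) * B1"
      proof (rule mult_mono)
        show "\<alpha> / s \<le> \<alpha> / t0" using st t0 alpha by (intro divide_left_mono) auto
        show "norm (x' s) \<le> B1" using B1 s by auto
      qed (use t0 alpha in auto)
      also have "norm c \<le> B2"
        using Cset_norm[OF c(1)] B2(2)[of s] s by auto
      finally show ?thesis unfolding M_def by simp
    qed
    have hi: "norm (x' v - x' u) \<le> M * (v - u)" if uv: "t0 \<le> u" "u \<le> v" "v \<le> T" for u v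
    proof -
      define w where "w = x' v - x' u"
      define q where "q s = w \<bullet> x'' s" for s
      have qint: "(q has_integral (w \<bullet> (x' s - x' t0))) {t0..s}" if "s \<ge> t0" for s
        using has_integral_linear[OF x''_int[OF that] bounded_linear_inner_right[of w]]
        unfolding q_def o_def .
      have intv: "q integrable_on {t0..v}" using qint[of v] uv unfolding integrable_on_def by auto
      have "integral {t0..u} q + integral {u..v} q = integral {t0..v} q"
        by (rule Henstock_Kurzweil_Integration.integral_combine[OF uv(1,2) intv])
      moreover have "integral {t0..u} q = w \<bullet> (x' u - x' t0)" using qint[of u] uv by (simp add: integral_unique)
      moreover have "integral {t0..v} q = w \<bullet> (x' v - x' t0)" using qint[of v] uv by (simp add: integral_unique)
      ultimately have ieq: "integral {u..v} q = w \<bullet> w" unfolding w_def by (simp add: algebra_simps inner_diff_right)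
      have "q integrable_on {u..v}" by (rule integrable_subinterval_real[OF intv]) (use uv in auto)
      then have hint: "(q has_integral (w \<bullet> w)) {u..v}" using ieq by (metis has_integral_integral)
      define y where "y s = (if s \<in> E \<union> {t0} then 0 else q s)" for s
      have "(y has_integral (w \<bullet> w)) {u..v}"
        by (rule has_integral_spike[OF _ _ hint, of "E \<union> {t0}"]) (use negE in \<open>auto simp: y_def\<close>)
      moreover have "\<forall>s\<in>{u..v}. norm (y s) \<le> norm w * M"
      proof
        fix s assume s: "s \<in> {u..v}"
        show "norm (y s) \<le> norm w * M"
        proof (cases "s \<in> E \<union> {t0}")
          case False
          have "norm (q s) \<le> norm w * norm (x'' s)" unfolding q_def by (simp add: Cauchy_Schwarz_ineq2)
          also have "\<dots> \<le> norm w * M" using bd[of s] s uv False by (intro mult_left_mono) auto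
          finally show ?thesis using False unfolding y_def by simp
        qed (use M0 in \<open>auto simp: y_def\<close>)
      qed
      ultimately have "norm (w \<bullet> w) \<le> (norm w * M) * (v - u)"
        using has_integral_bound_real[of "norm w * M" "{}" y "w \<bullet> w" u v] M0 uv by simp
      then have "norm w * norm w \<le> norm w * (M * (v - u))"
        using uv by (simp add: power2_norm_eq_inner[symmetric] power2_eq_square mult.assoc)
      then show ?thesis unfolding w_def
        by (cases "norm (x' v - x' u) = 0") (use M0 uv in \<open>auto simp: w_def\<close>)
    qed
    show ?thesis
    proof (intro exI ballI)
      fix u v assume "u \<in> {t0..T}" "v \<in> {t0..T}"
      then show "norm (x' v - x' u) \<le> M * \<bar>v - u\<bar>"
        using hi[of u v] hi[of v u] by (cases "u \<le> v") (auto simp: norm_minus_commute)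
    qed
  qed
  have px'_gen: "plip x' {t0..T} t" if T: "T \<ge> t0" and t: "t \<in> {t0..T}" for T t
  proof -
    obtain M where M: "\<forall>u\<in>{t0..T}. \<forall>v\<in>{t0..T}. norm (x' v - x' u) \<le> M * \<bar>v - u\<bar>" using lipx'[OF T] by blast
    show ?thesis by (rule plip_lipschitz[of "{t0..T}" x' t M]) (use M t in auto)
  qed
  have xdT: "(x has_vector_derivative x' t) (at t within {t0..T})" if "t \<in> {t0..T}" for T t
    using xdS[of t "{t0..T}"] that by auto
  have pfi_gen: "plip (\<lambda>s. f i (x s)) {t0..T} t" if "t \<in> {t0..T}" for T t i
    by (rule plip_deriv[OF comp_deriv[OF xdT[OF that] grad]])
  have px_gen: "plip x {t0..T} t" if "t \<in> {t0..T}" for T t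
    by (rule plip_deriv[OF xdT[OF that]])
  have pid_gen: "plip (\<lambda>s. s) {t0..T} t" for T t
    by (rule plip_deriv[OF has_vector_derivative_id])
  have level: "\<And>T i. T \<ge> t0 \<Longrightarrow> f i (x T) \<le> f i x0"
  proof -
    fix T i assume T: "T \<ge> t0"
    define H where "H s = f i (x s) + (1/2) * (x' s \<bullet> x' s)" for s
    have "H T \<le> H t0"
    proof (rule mono_wrap[OF T negE])
      fix t assume t: "t \<in> {t0..T}"
      show "plip H {t0..T} t" unfolding H_def
        by (intro plip_add pfi_gen plip_mult plip_const plip_inner px'_gen[OF T] t)
    next
      fix t assume t: "t \<in> {t0<..<T} - E"
      then have tt: "t > t0" "t \<notin> E" by auto
      obtain c where c: "c \<in> Cset g (x t)" "x'' t = -(\<alpha>/t) *\<^sub>R x' t - c" "\<forall>j. x' t \<bullet> g j (x t) \<le> x' t \<bullet> c"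
        using dyn[OF tt] by blast
      have d: "(H has_vector_derivative (g i (x t) \<bullet> x' t + (1/2) * (x' t \<bullet> x'' t + x'' t \<bullet> x' t))) (at t)"
        unfolding H_def
        by (intro has_vector_derivative_add comp_deriv[OF xd_at[OF tt(1)] grad] has_vector_derivative_mult_right vd_inner x'd_at[OF tt])
      have D: "g i (x t) \<bullet> x' t + (1/2) * (x' t \<bullet> x'' t + x'' t \<bullet> x' t) \<le> 0"
      proof -
        have e1: "x'' t \<bullet> x' t = x' t \<bullet> x'' t" "g i (x t) \<bullet> x' t = x' t \<bullet> g i (x t)" by (simp_all add: inner_commute)
        have "x' t \<bullet> x'' t = - ((\<alpha>/t) * (x' t \<bullet> x' t)) - x' t \<bullet> c" using c(2) by (simp add: inner_diff_right)
        moreover have "(\<alpha>/t) * (x' t \<bullet> x' t) \<ge> 0" using tt t0 alpha by simp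
        moreover have "x' t \<bullet> g i (x t) \<le> x' t \<bullet> c" using c(3) by blast
        ultimately have "x' t \<bullet> g i (x t) + x' t \<bullet> x'' t \<le> 0" by linarith
        moreover have "g i (x t) \<bullet> x' t + (1/2) * (x' t \<bullet> x'' t + x'' t \<bullet> x' t) = x' t \<bullet> g i (x t) + x' t \<bullet> x'' t"
          unfolding e1 by simp
        ultimately show ?thesis by simp
      qed
      show "\<exists>K D. K t = H t \<and> (\<forall>s. H s \<le> K s) \<and> (K has_real_derivative D) (at t) \<and> D \<le> 0"
        using d D by (intro exI[of _ H] exI conjI) (auto simp: has_real_derivative_iff_has_vector_derivative)
    qed
    moreover have "H t0 = f i x0" unfolding H_def using init by simp
    moreover have "f i (x T) \<le> H T" unfolding H_def by simp
    ultimately show "f i (x T) \<le> f i x0" by linarith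
  qed
  have lyap: "\<And>T z. T \<ge> t0 \<Longrightarrow> T\<^sup>2 * \<phi> (x T) z \<le> t0\<^sup>2 * \<phi> x0 z + (\<alpha> - 1) * (norm (x0 - z))\<^sup>2 + (3 - \<alpha>) * Ig T"
  proof -
    fix T z assume T: "T \<ge> t0"
    define Gc where "Gc s = (3 - \<alpha>) * (s * (norm (x' s))\<^sup>2)" for s
    have contGc: "continuous_on {t0..T} Gc"
      unfolding Gc_def using x'_cont by (intro continuous_intros) (auto intro: continuous_on_subset)
    define \<Phi> where "\<Phi> s = integral {t0..s} Gc" for s
    have d\<Phi>: "(\<Phi> has_vector_derivative Gc t) (at t within {t0..T})" if "t \<in> {t0..T}" for t
      unfolding \<Phi>_def by (rule integral_has_vector_derivative[OF contGc that])
    have \<Phi>T: "\<Phi> T = (3 - \<alpha>) * Ig T" unfolding \<Phi>_def Gc_def Ig_def by simp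
    have \<Phi>0: "\<Phi> t0 = 0" unfolding \<Phi>_def by simp
    define yv where "yv s = x s - z" for s
    define wv where "wv s = 2 *\<^sub>R yv s + s *\<^sub>R x' s" for s
    define H where "H s = (s * s) * \<phi> (x s) z + (1/2) * (wv s \<bullet> wv s) + (\<alpha> - 3) * (yv s \<bullet> yv s) - \<Phi> s" for s
    have "H T \<le> H t0"
    proof (rule mono_wrap[OF T negE])
      fix t assume t: "t \<in> {t0..T}"
      show "plip H {t0..T} t" unfolding H_def wv_def yv_def \<phi>_def
        by (intro plip_diff plip_add plip_mult plip_inner plip_scaleR plip_scaleR_fun plip_const pid_gen px_gen
              px'_gen[OF T] pfi_gen plip_Min plip_deriv[OF d\<Phi>] t)
    next
      fix t assume t: "t \<in> {t0<..<T} - E"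
      then have tt: "t > t0" "t \<notin> E" and tT: "t < T" by auto
      have tpos: "t > 0" using tt t0 by simp
      obtain c where c: "c \<in> Cset g (x t)" "x'' t = -(\<alpha>/t) *\<^sub>R x' t - c" "\<forall>j. x' t \<bullet> g j (x t) \<le> x' t \<bullet> c"
        using dyn[OF tt] by blast
      have "Min (range (\<lambda>i. f i (x t) - f i z)) \<in> range (\<lambda>i. f i (x t) - f i z)" by (rule Min_in) auto
      then obtain j where "Min (range (\<lambda>i. f i (x t) - f i z)) = f j (x t) - f j z" by blast
      then have j: "\<phi> (x t) z = f j (x t) - f j z" unfolding \<phi>_def .
      define K where "K s = (s * s) * (f j (x s) - f j z) + (1/2) * (wv s \<bullet> wv s) + (\<alpha> - 3) * (yv s \<bullet> yv s) - \<Phi> s" for s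
      have Kt: "K t = H t" unfolding K_def H_def j ..
      have HK: "H s \<le> K s" for s
      proof -
        have "\<phi> (x s) z \<le> f j (x s) - f j z" unfolding \<phi>_def by (rule Min_le) auto
        then have "(s * s) * \<phi> (x s) z \<le> (s * s) * (f j (x s) - f j z)" by (intro mult_left_mono) auto
        then show ?thesis unfolding H_def K_def by linarith
      qed
      have dy: "(yv has_vector_derivative x' t) (at t)"
        unfolding yv_def using has_vector_derivative_diff[OF xd_at[OF tt(1)] has_vector_derivative_const[of z]] by simp
      define w1 where "w1 = 2 *\<^sub>R x' t + (t *\<^sub>R x'' t + x' t)"
      have dw: "(wv has_vector_derivative w1) (at t)"
        unfolding wv_def w1_def
        using has_vector_derivative_add[OF has_vector_derivative_scaleR[OF DERIV_const dy] has_vector_derivative_scaleR[OF DERIV_ident x'd_at[OF tt]]]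
        by simp
      have dh: "((\<lambda>s. f j (x s) - f j z) has_vector_derivative (g j (x t) \<bullet> x' t)) (at t)"
        using has_vector_derivative_diff[OF comp_deriv[OF xd_at[OF tt(1)] grad] has_vector_derivative_const[of "f j z"]] by simp
      have dss: "((\<lambda>s. s * s) has_vector_derivative (2 * t)) (at t)"
        using has_vector_derivative_mult[OF has_vector_derivative_id has_vector_derivative_id, of t UNIV] by simp
      have tint: "t \<in> interior {t0..T}" using tt tT by simp
      have d\<Phi>t: "(\<Phi> has_vector_derivative Gc t) (at t)"
        using d\<Phi>[of t] tt tT at_within_interior[OF tint] by simp
      define D where "D = ((t * t) * (g j (x t) \<bullet> x' t) + 2 * t * (f j (x t) - f j z))
          + (1/2) * (wv t \<bullet> w1 + w1 \<bullet> wv t) + (\<alpha> - 3) * (yv t \<bullet> x' t + x' t \<bullet> yv t) - Gc t"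
      have dK: "(K has_vector_derivative D) (at t)"
        unfolding K_def D_def
        by (rule has_vector_derivative_eq_rhs[OF has_vector_derivative_diff[OF has_vector_derivative_add[OF has_vector_derivative_add[OF
              has_vector_derivative_mult[OF dss dh] has_vector_derivative_mult_right[OF vd_inner[OF dw dw]]]
              has_vector_derivative_mult_right[OF vd_inner[OF dy dy]]] d\<Phi>t]]) simp
      have D_eq: "D = (t * t) * (x' t \<bullet> g j (x t) - x' t \<bullet> c) + 2 * t * (\<phi> (x t) z - yv t \<bullet> c)"
      proof -
        have "t *\<^sub>R x'' t = - \<alpha> *\<^sub>R x' t - t *\<^sub>R c"
          using tpos unfolding c(2) by (simp add: scaleR_diff_right)
        then have "w1 = 2 *\<^sub>R x' t + ((- \<alpha> *\<^sub>R x' t - t *\<^sub>R c) + x' t)" unfolding w1_def by simp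
        moreover have h3: "(3::real) *\<^sub>R v = 2 *\<^sub>R v + v" for v :: 'a using scaleR_add_left[of 2 1 v] by simp
        ultimately have w1e: "w1 = (3 - \<alpha>) *\<^sub>R x' t - t *\<^sub>R c" by (simp add: algebra_simps h3 scaleR_diff_left)
        have wve: "wv t = 2 *\<^sub>R yv t + t *\<^sub>R x' t" unfolding wv_def ..
        show ?thesis unfolding D_def j Gc_def by (rule D_alg[OF wve w1e])
      qed
      have hc: "\<phi> (x t) z \<le> yv t \<bullet> c"
      proof (rule Cset_halfspace[OF c(1)])
        fix i
        have "\<phi> (x t) z \<le> f i (x t) - f i z" unfolding \<phi>_def by (rule Min_le) auto
        also have "f i (x t) - f i z \<le> g i (x t) \<bullet> (x t - z)"
          using grad_ineq[OF conv grad, of i "x t" z] by (simp add: inner_diff_right)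
        finally show "\<phi> (x t) z \<le> yv t \<bullet> g i (x t)" unfolding yv_def by (simp add: inner_commute)
      qed
      have "D \<le> 0"
      proof -
        have "(t * t) * (x' t \<bullet> g j (x t) - x' t \<bullet> c) \<le> 0"
          using c(3) by (intro mult_nonneg_nonpos) auto
        moreover have "2 * t * (\<phi> (x t) z - yv t \<bullet> c) \<le> 0"
          using hc tpos by (intro mult_nonneg_nonpos) auto
        ultimately show ?thesis unfolding D_eq by linarith
      qed
      then show "\<exists>K D. K t = H t \<and> (\<forall>s. H s \<le> K s) \<and> (K has_real_derivative D) (at t) \<and> D \<le> 0"
        using Kt HK dK by (intro exI[of _ K] exI[of _ D] conjI allI) (auto simp: has_real_derivative_iff_has_vector_derivative)
    qed
    moreover have "H t0 = t0\<^sup>2 * \<phi> x0 z + (\<alpha> - 1) * (norm (x0 - z))\<^sup>2"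
    proof -
      define v where "v = x0 - z"
      have yv0: "yv t0 = v" unfolding yv_def v_def using init by simp
      have wv0: "wv t0 = 2 *\<^sub>R v" unfolding wv_def yv0 using init by simp
      have "H t0 = t0 * t0 * \<phi> x0 z + (1/2) * ((2 *\<^sub>R v) \<bullet> (2 *\<^sub>R v)) + (\<alpha> - 3) * (v \<bullet> v)"
        unfolding H_def wv0 yv0 \<Phi>0 using init by simp
      also have "(2 *\<^sub>R v) \<bullet> (2 *\<^sub>R v) = 4 * (v \<bullet> v)" by simp
      also have "(norm (x0 - z))\<^sup>2 = v \<bullet> v" unfolding v_def by (simp add: power2_norm_eq_inner)
      ultimately show ?thesis by (simp add: power2_eq_square algebra_simps)
    qed
    moreover have "T\<^sup>2 * \<phi> (x T) z \<le> H T + \<Phi> T"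
    proof -
      have "0 \<le> (1/2) * (wv T \<bullet> wv T)" by simp
      moreover have "0 \<le> (\<alpha> - 3) * (yv T \<bullet> yv T)" using alpha by simp
      ultimately show ?thesis unfolding H_def by (simp add: power2_eq_square)
    qed
    ultimately show "T\<^sup>2 * \<phi> (x T) z \<le> t0\<^sup>2 * \<phi> x0 z + (\<alpha> - 1) * (norm (x0 - z))\<^sup>2 + (3 - \<alpha>) * Ig T"
      using \<Phi>T by linarith
  qed
  have Ig_nonneg: "\<And>T. T \<ge> t0 \<Longrightarrow> Ig T \<ge> 0"
  proof -
    fix T assume T: "T \<ge> t0"
    have "continuous_on {t0..T} (\<lambda>s. s * (norm (x' s))\<^sup>2)"
      using x'_cont by (intro continuous_intros) (auto intro: continuous_on_subset)
    then show "Ig T \<ge> 0" unfolding Ig_def using t0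
      by (intro integral_nonneg integrable_continuous_real) auto
  qed
  have u0_eq: "u0 f y = (SUP z. ereal (\<phi> y z))" for y unfolding u0_def \<phi>_def ..
  have phi_self: "\<phi> y y = 0" for y unfolding \<phi>_def by simp
  have u0_nonneg: "u0 f y \<ge> 0" for y
    unfolding u0_eq using phi_self by (metis SUP_upper UNIV_I zero_ereal_def)
  define WP where "WP = weak_pareto_level f (Fv f x0)"
  define J where "J Fs = Inf ((\<lambda>w. (norm (w - x0))\<^sup>2 / 2) ` (Fv f -` {Fs}))" for Fs
  have R_eq: "Rconst f x0 = (SUP Fs \<in> Fv f ` WP. ereal (J Fs))"
    unfolding Rconst_def WP_def J_def ..
  have J_nonneg: "J (Fv f w) \<ge> 0" for w
    unfolding J_def by (rule cInf_greatest) auto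
  have WP_ne: "WP \<noteq> {}"
    using pareto[of x0 x0] unfolding WP_def level_def Fv_def by auto
  have R_nonneg: "Rconst f x0 \<ge> 0"
  proof -
    obtain w where "w \<in> WP" using WP_ne by blast
    then have "ereal (J (Fv f w)) \<le> Rconst f x0" unfolding R_eq by (intro SUP_upper) auto
    then show ?thesis using J_nonneg[of w] by (meson ereal_less_eq(5) order_trans)
  qed
  then obtain r where r: "Rconst f x0 = ereal r" "r \<ge> 0"
    using R_fin by (cases "Rconst f x0") auto
  have J_le: "J (Fv f w) \<le> r" if "w \<in> WP" for w
  proof -
    have "ereal (J (Fv f w)) \<le> Rconst f x0" unfolding R_eq using that by (intro SUP_upper) auto
    then show ?thesis using r by simp
  qed
  show ?thesis
  proof (intro allI impI)
    fix T assume T: "T \<ge> t0"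
    have Tpos: "T > 0" using T t0 by simp
    show "ereal (T\<^sup>2) * u0 f (x T) \<le> ereal (t0\<^sup>2) * u0 f x0 + ereal (2 * (\<alpha> - 1)) * Rconst f x0
        + ereal ((3 - \<alpha>) * integral {t0..T} (\<lambda>s. s * (norm (x' s))\<^sup>2))
      \<and> u0 f (x T) \<le> (ereal (t0\<^sup>2) * u0 f x0 + ereal (2 * (\<alpha> - 1)) * Rconst f x0) / ereal (T\<^sup>2)"
    proof (cases "u0 f x0 = \<infinity>")
      case True
      have "ereal (t0\<^sup>2) * u0 f x0 = \<infinity>" using True t0 by simp
      then show ?thesis using r Tpos by simp
    next
      case False
      then obtain u where u: "u0 f x0 = ereal u" using u0_nonneg[of x0] by (cases "u0 f x0") auto
      have phi_le_u: "\<phi> x0 w \<le> u" for w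
      proof -
        have "ereal (\<phi> x0 w) \<le> u0 f x0" unfolding u0_eq by (rule SUP_upper) auto
        then show ?thesis using u by simp
      qed
      define C where "C = t0\<^sup>2 * u + 2 * (\<alpha> - 1) * r + (3 - \<alpha>) * Ig T"
      have key: "T\<^sup>2 * \<phi> (x T) z \<le> C" for z
      proof (rule field_le_epsilon)
        fix e :: real assume e: "e > 0"
        define \<delta> where "\<delta> = e / (2 * (\<alpha> - 1))"
        have \<delta>: "\<delta> > 0" "2 * (\<alpha> - 1) * \<delta> = e" using e alpha unfolding \<delta>_def by auto
        obtain y where y: "\<And>i. f i y \<le> f i x0" "\<phi> (x T) z \<le> \<phi> (x T) y"
        proof (cases "\<phi> (x T) z \<le> 0")
          case True
          then show ?thesis using that[of "x T"] level[OF T] phi_self by auto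
        next
          case False
          have "f i z \<le> f i x0" for i
          proof -
            have "\<phi> (x T) z \<le> f i (x T) - f i z" unfolding \<phi>_def by simp
            then show ?thesis using False level[OF T, of i] by linarith
          qed
          then show ?thesis using that[of z] by auto
        qed
        obtain xs where xs: "xs \<in> weak_pareto_level f (Fv f y)"
          using pareto[of y x0] y(1) unfolding level_def Fv_def by auto
        have xsWP: "xs \<in> WP" and xsy: "\<And>i. f i xs \<le> f i y"
          using xs y(1) unfolding WP_def weak_pareto_level_def level_def Fv_def by (auto intro: order_trans)
        have "J (Fv f xs) < r + \<delta>" using J_le[OF xsWP] \<delta> by simp
        moreover have "(\<lambda>w. (norm (w - x0))\<^sup>2 / 2) ` (Fv f -` {Fv f xs}) \<noteq> {}" by auto
        ultimately have "\<exists>v\<in>(\<lambda>w. (norm (w - x0))\<^sup>2 / 2) ` (Fv f -` {Fv f xs}). v < r + \<delta>"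
          unfolding J_def by (intro cInf_lessD) auto
        then obtain w where w: "Fv f w = Fv f xs" "(norm (w - x0))\<^sup>2 / 2 < r + \<delta>"
          by auto
        have fw: "f i w = f i xs" for i using w(1) unfolding Fv_def by meson
        have "\<phi> (x T) y \<le> \<phi> (x T) w"
          unfolding \<phi>_def by (rule Min_mono_range) (use fw xsy in auto)
        then have "T\<^sup>2 * \<phi> (x T) z \<le> T\<^sup>2 * \<phi> (x T) w"
          using y(2) by (intro mult_left_mono) auto
        also have "\<dots> \<le> t0\<^sup>2 * \<phi> x0 w + (\<alpha> - 1) * (norm (x0 - w))\<^sup>2 + (3 - \<alpha>) * Ig T"
          by (rule lyap[OF T])
        also have "t0\<^sup>2 * \<phi> x0 w \<le> t0\<^sup>2 * u" using phi_le_u by (intro mult_left_mono) auto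
        also have "(\<alpha> - 1) * (norm (x0 - w))\<^sup>2 \<le> 2 * (\<alpha> - 1) * (r + \<delta>)"
        proof -
          have "(norm (x0 - w))\<^sup>2 \<le> 2 * (r + \<delta>)" using w(2) by (simp add: norm_minus_commute)
          then have "(\<alpha> - 1) * (norm (x0 - w))\<^sup>2 \<le> (\<alpha> - 1) * (2 * (r + \<delta>))"
            using alpha by (intro mult_left_mono) auto
          then show ?thesis by (simp add: algebra_simps)
        qed
        finally show "T\<^sup>2 * \<phi> (x T) z \<le> C + e" unfolding C_def using \<delta>(2) by (simp add: algebra_simps)
      qed
      have u0T: "u0 f (x T) \<le> ereal (C / T\<^sup>2)"
        unfolding u0_eq
      proof (rule SUP_least)
        fix z show "ereal (\<phi> (x T) z) \<le> ereal (C / T\<^sup>2)"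
          using key[of z] Tpos by (simp add: pos_le_divide_eq mult.commute)
      qed
      have "ereal (T\<^sup>2) * u0 f (x T) \<le> ereal (T\<^sup>2) * ereal (C / T\<^sup>2)"
        by (rule ereal_mult_left_mono[OF u0T]) simp
      also have "\<dots> = ereal C" using Tpos by simp
      finally have c1: "ereal (T\<^sup>2) * u0 f (x T) \<le> ereal C" .
      have C_le: "C \<le> t0\<^sup>2 * u + 2 * (\<alpha> - 1) * r"
        unfolding C_def using Ig_nonneg[OF T] alpha by (simp add: mult_nonpos_nonneg)
      have "u0 f (x T) \<le> ereal ((t0\<^sup>2 * u + 2 * (\<alpha> - 1) * r) / T\<^sup>2)"
        using u0T C_le Tpos by (meson divide_right_mono ereal_less_eq(3) order_trans zero_le_power2)
      then show ?thesis using c1 u r Tpos unfolding C_def Ig_def by simp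
    qed
  qed
qed


end
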